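(* Let $\mathbb{K}$ be a distribution of $y\in(0,\infty)$, let $0<\epsilon\le 0.01$, and suppose $\theta^*\in\mathbb{R}^+$ attains $\min_{\theta\in\mathbb{R}^+}\mathrm{CR}(\theta,\mathbb{K})$; write $f^*_{\mathbb{K}}=\mathrm{CR}(\theta^*,\mathbb{K})$. Let $f^\epsilon_{\mathbb{K}}=\inf_{\theta\in[\epsilon,1/\epsilon]}\mathrm{CR}(\theta,\mathbb{K})$. Then $$f^\epsilon_{\mathbb{K}}\le(1+\epsilon)f^*_{\mathbb{K}}.$$
   Context: For threshold $\theta\ge0$ and season length $y>0$: $g(\theta,y)=\frac{1+\theta}{\min\{1,y\}}$ if $y\ge\theta$ and $g(\theta,y)=\frac{y}{\min\{1,y\}}$ otherwise (the competitive ratio of the ski-rental strategy that rents, at cost $1$ per unit time, until time $\theta$ and then buys at cost $1$). $\mathrm{CR}(\theta,\mathbb{K})=\mathbb{E}_{y\sim\mathbb{K}}[g(\theta,y)]$. *)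

theory Defs
  imports "HOL-Probability.Probability"
begin

text \<open>Competitive ratio of the ski-rental strategy with threshold theta on season length y.\<close>
definition g :: "real \<Rightarrow> real \<Rightarrow> real" where
  "g \<theta> y = (if y \<ge> \<theta> then (1 + \<theta>) / min 1 y else y / min 1 y)"

definition CR :: "real \<Rightarrow> real measure \<Rightarrow> ennreal" where
  "CR \<theta> K = (\<integral>\<^sup>+ y. ennreal (g \<theta> y) \<partial>K)"

end

theory Submission
  imports Defs
begin

lemma g_meas: "(\<lambda>y. ennreal (g t y)) \<in> borel_measurable borel"
  unfolding g_def by measurable

lemma cmp:
  assumes "\<And>y. g t y \<le> (1+e) * g s y" "e \<ge> 0" "sets K = sets borel"
  shows "CR t K \<le> (1 + ennreal e) * CR s K"
proof -
  have m: "(\<lambda>y. ennreal (g s y)) \<in> borel_measurable K"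
    using g_meas measurable_cong_sets[OF assms(3) refl] by blast
  have "CR t K \<le> (\<integral>\<^sup>+ y. ennreal (1+e) * ennreal (g s y) \<partial>K)"
    unfolding CR_def
  proof (rule nn_integral_mono)
    fix y
    have "ennreal (g t y) \<le> ennreal ((1+e) * g s y)" using assms(1) ennreal_leI by blast
    also have "\<dots> = ennreal (1+e) * ennreal (g s y)"
      using assms(2) by (simp add: ennreal_mult')
    finally show "ennreal (g t y) \<le> ennreal (1+e) * ennreal (g s y)" .
  qed
  also have "\<dots> = ennreal (1+e) * CR s K" unfolding CR_def
    by (rule nn_integral_cmult[OF m])
  also have "ennreal (1+e) = 1 + ennreal e" using assms(2) by simp
  finally show ?thesis .
qed

lemma g_nonneg: "s \<ge> 0 \<Longrightarrow> g s y \<ge> 0"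
  unfolding g_def by (auto simp: min_def)

lemma pw_small:
  assumes "0 \<le> s" "s < e" "e < 1"
  shows "g e y \<le> (1+e) * g s y"
proof (cases "y < s")
  case True
  then have "g e y = g s y" using assms unfolding g_def by auto
  moreover have "g s y \<ge> 0" using g_nonneg assms by auto
  ultimately show ?thesis using assms by (simp add: mult_le_cancel_right1)
next
  case False
  show ?thesis
  proof (cases "y < e")
    case True
    with False assms have y: "0 \<le> y" "y < 1" by auto
    have "g e y = y / y" unfolding g_def using True y by (simp add: min_def)
    also have "\<dots> \<le> 1" by simp
    also have "1 \<le> (1+s)/y" if "y > 0" using y that assms by (simp add: field_simps)
    then have "1 \<le> (1+e) * ((1+s) / y) \<or> y = 0" using y assms
      by (smt (verit, best) divide_nonneg_nonneg mult_le_cancel_right1 mult_nonneg_nonneg)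
    moreover have "g s y = (1+s)/y" unfolding g_def using False y by (simp add: min_def)
    ultimately show ?thesis using \<open>g e y = y / y\<close> by auto
  next
    case F2: False
    have m: "min 1 y > 0" using F2 assms by auto
    have "g e y = (1+e)/min 1 y" "g s y = (1+s)/min 1 y" unfolding g_def using False F2 by auto
    moreover have "1/min 1 y \<le> (1+s)/min 1 y" using m assms by (intro divide_right_mono) auto
    then have "(1+e)*(1/min 1 y) \<le> (1+e)*((1+s)/min 1 y)" using assms by (intro mult_left_mono) auto
    ultimately show ?thesis by simp
  qed
qed

lemma pw_large:
  assumes "M \<ge> 1" "s > M" "(1+e)*M \<ge> 1 + M" "e \<ge> 0"
  shows "g M y \<le> (1+e) * g s y"
proof (cases "y < M")
  case True
  then have "g M y = g s y" using assms unfolding g_def by auto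
  moreover have "g s y \<ge> 0" using g_nonneg assms by auto
  ultimately show ?thesis using assms by (simp add: mult_le_cancel_right1)
next
  case False
  then have gm: "g M y = 1 + M" unfolding g_def using assms by (simp add: min_def)
  show ?thesis
  proof (cases "y < s")
    case True
    then have "g s y = y" unfolding g_def using False assms by (simp add: min_def)
    moreover have "(1+e)*M \<le> (1+e)*y" using False assms by (intro mult_left_mono) auto
    ultimately show ?thesis unfolding gm using assms(3) by (metis order_trans)
  next
    case F2: False
    then have "g s y = 1 + s" unfolding g_def using False assms by (simp add: min_def)
    moreover have "1 + M \<le> 1 + s" using assms by auto
    moreover have "1 + s \<le> (1+e)*(1+s)" using assms by (simp add: field_simps)
    ultimately show ?thesis using gm by simp
  qed
qed

theorem mainTheorem4:
  fixes K :: "real measure" and \<epsilon> \<theta>star :: real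
  assumes "prob_space K"
    and "sets K = sets borel"
    and "AE y in K. y > 0"
    and "0 < \<epsilon>" and "\<epsilon> \<le> 0.01"
    and "\<theta>star \<ge> 0"
    and "\<forall>\<theta>\<ge>0. CR \<theta>star K \<le> CR \<theta> K"
  shows "(INF \<theta>\<in>{\<epsilon>..1/\<epsilon>}. CR \<theta> K) \<le> (1 + ennreal \<epsilon>) * CR \<theta>star K"
proof -
  have big: "1/\<epsilon> \<ge> 100" using assms(4,5) by (simp add: field_simps)
  have "\<exists>t\<in>{\<epsilon>..1/\<epsilon>}. CR t K \<le> (1 + ennreal \<epsilon>) * CR \<theta>star K"
  proof (cases "\<theta>star < \<epsilon>")
    case True
    show ?thesis
      by (rule bexI[of _ \<epsilon>], rule cmp[OF pw_small])
         (use True assms big in auto)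
  next
    case F: False
    show ?thesis
    proof (cases "\<theta>star > 1/\<epsilon>")
      case True
      have "(1+\<epsilon>)*(1/\<epsilon>) \<ge> 1 + 1/\<epsilon>" using assms(4) by (simp add: field_simps)
      then show ?thesis
        by (intro bexI[of _ "1/\<epsilon>"] cmp[OF pw_large]) (use True assms big in auto)
    next
      case False
      have "CR \<theta>star K \<le> 1 * CR \<theta>star K" by simp
      also have "\<dots> \<le> (1 + ennreal \<epsilon>) * CR \<theta>star K" by (intro mult_right_mono) auto
      finally show ?thesis using F False by (intro bexI[of _ \<theta>star]) auto
    qed
  qed
  then obtain t where "t \<in> {\<epsilon>..1/\<epsilon>}" "CR t K \<le> (1 + ennreal \<epsilon>) * CR \<theta>star K" by blast
  then show ?thesis by (meson INF_lower order_trans)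
qed

end
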